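(* Under the model and the scheme described in the context, for every $t\ge 1$, $$I\big(X_0;\,Q_t \,\big|\, (Q_i)_{i\le t-1}\big)=0.$$ Together with Claim 1 this gives $I\big((X_i)_{i\le 0};Q_t\mid (Q_i)_{i\le t-1}\big)=0$ for all $t\ge1$, i.e. the scheme satisfies the privacy constraint for the step privacy mode ($\mathrm{ON}$ for $t\le 0$, $\mathrm{OFF}$ for $t\ge1$).
   Context: Model. Fix $\alpha,\beta\in[0,1]$. The user's requests $\{X_t\}_{t\in\mathbb{Z}}$ form a time-homogeneous Markov chain on $\{A,B\}$ with $\Pr(X_{t+1}=B\mid X_t=A)=\alpha$ and $\Pr(X_{t+1}=A\mid X_t=B)=\beta$, and $0<\Pr(X_t=A)<1$ for every $t$. The user has mutually independent local randomness $\{S_t\}_{t\in\mathbb{Z}}$, independent of $\{X_t\}$. Scheme. Queries take values in $\{A,B,AB\}$. For $t\le 0$, $Q_t=AB$. For $t\ge1$, $Q_t$ is generated from $(X_0,X_t,Q_{t-1})$ and fresh randomness $S_t$ (so that, given $(X_0,X_t,Q_{t-1})$, $Q_t$ is conditionally independent of all other requests and queries) as follows. If $Q_{t-1}\in\{A,B\}$ then $Q_t=X_t$. If $Q_{t-1}=AB$, then the conditional law of $Q_t$ given $(X_0,X_t)$ is: (i) if $\alpha+\beta<1$: for $(X_0,X_t)=(A,A)$, $Q_t=A$ w.p. $\beta/(1-\alpha)$ and $Q_t=AB$ w.p. $(1-\alpha-\beta)/(1-\alpha)$; for $(A,B)$, $Q_t=B$; for $(B,A)$, $Q_t=A$; for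 $(B,B)$, $Q_t=B$ w.p. $\alpha/(1-\beta)$ and $Q_t=AB$ w.p. $(1-\alpha-\beta)/(1-\beta)$; (ii) if $\alpha+\beta=1$: $Q_t=X_t$; (iii) if $\alpha+\beta>1$ and $t$ even: for $(A,A)$, $Q_t=A$ w.p. $(1-\alpha)/\beta$ and $AB$ w.p. $(\alpha+\beta-1)/\beta$; for $(A,B)$, $Q_t=B$; for $(B,A)$, $Q_t=A$; for $(B,B)$, $Q_t=B$ w.p. $(1-\beta)/\alpha$ and $AB$ w.p. $(\alpha+\beta-1)/\alpha$; (iv) if $\alpha+\beta>1$ and $t$ odd: for $(A,A)$, $Q_t=A$; for $(A,B)$, $Q_t=B$ w.p. $(1-\beta)/\alpha$ and $AB$ w.p. $(\alpha+\beta-1)/\alpha$; for $(B,A)$, $Q_t=A$ w.p. $(1-\alpha)/\beta$ and $AB$ w.p. $(\alpha+\beta-1)/\beta$; for $(B,B)$, $Q_t=B$. *)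

theory Defs
  imports "HOL-Probability.Probability"
begin

datatype st = A | B
datatype qry = QA | QB | QAB

definition qry_of :: "st \<Rightarrow> qry" where
  "qry_of x = (case x of A \<Rightarrow> QA | B \<Rightarrow> QB)"

definition mix :: "real \<Rightarrow> 'a \<Rightarrow> 'a \<Rightarrow> 'a pmf" where
  "mix p q1 q2 = map_pmf (\<lambda>b. if b then q1 else q2) (bernoulli_pmf p)"

definition trans_pmf :: "real \<Rightarrow> real \<Rightarrow> st \<Rightarrow> st pmf" where
  "trans_pmf \<alpha> \<beta> x = (case x of A \<Rightarrow> mix \<alpha> B A | B \<Rightarrow> mix \<beta> A B)"

definition scheme_pmf :: "real \<Rightarrow> real \<Rightarrow> nat \<Rightarrow> st \<Rightarrow> st \<Rightarrow> qry \<Rightarrow> qry pmf" where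
  "scheme_pmf \<alpha> \<beta> t x0 xt qprev =
    (if qprev \<noteq> QAB then return_pmf (qry_of xt)
     else if \<alpha> + \<beta> < 1 then
       (case (x0, xt) of
          (A, A) \<Rightarrow> mix (\<beta> / (1 - \<alpha>)) QA QAB
        | (A, B) \<Rightarrow> return_pmf QB
        | (B, A) \<Rightarrow> return_pmf QA
        | (B, B) \<Rightarrow> mix (\<alpha> / (1 - \<beta>)) QB QAB)
     else if \<alpha> + \<beta> = 1 then return_pmf (qry_of xt)
     else if even t then
       (case (x0, xt) of
          (A, A) \<Rightarrow> mix ((1 - \<alpha>) / \<beta>) QA QAB
        | (A, B) \<Rightarrow> return_pmf QB
        | (B, A) \<Rightarrow> return_pmf QA
        | (B, B) \<Rightarrow> mix ((1 - \<beta>) / \<alpha>) QB QAB)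
     else
       (case (x0, xt) of
          (A, A) \<Rightarrow> return_pmf QA
        | (A, B) \<Rightarrow> mix ((1 - \<beta>) / \<alpha>) QB QAB
        | (B, A) \<Rightarrow> mix ((1 - \<alpha>) / \<beta>) QA QAB
        | (B, B) \<Rightarrow> return_pmf QB))"

text \<open>Joint law of ([X_0, ..., X_t], [Q_1, ..., Q_t]), where p = Pr(X_0 = A).
  Q_i = AB for i <= 0, hence Q_0 = AB is used as the previous query at t = 1.
  Each step draws X_t from the transition kernel and then Q_t with fresh randomness
  from the scheme, given (X_0, X_t, Q_(t-1)).\<close>
fun traj :: "real \<Rightarrow> real \<Rightarrow> real \<Rightarrow> nat \<Rightarrow> (st list \<times> qry list) pmf" where
  "traj p \<alpha> \<beta> 0 = map_pmf (\<lambda>b. ([if b then A else B], [])) (bernoulli_pmf p)"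
| "traj p \<alpha> \<beta> (Suc t) =
     bind_pmf (traj p \<alpha> \<beta> t) (\<lambda>(xs, qs).
       bind_pmf (trans_pmf \<alpha> \<beta> (last xs)) (\<lambda>x'.
         map_pmf (\<lambda>q'. (xs @ [x'], qs @ [q']))
           (scheme_pmf \<alpha> \<beta> (Suc t) (hd xs) x' (last (QAB # qs)))))"

definition X0_rv :: "st list \<times> qry list \<Rightarrow> st" where
  "X0_rv \<omega> = hd (fst \<omega>)"
definition Qlast_rv :: "st list \<times> qry list \<Rightarrow> qry" where
  "Qlast_rv \<omega> = last (snd \<omega>)"
definition Qpast_rv :: "st list \<times> qry list \<Rightarrow> qry list" where
  "Qpast_rv \<omega> = butlast (snd \<omega>)"

end

theory Submission
  imports Defs
begin

instance st :: countable by countable_datatype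
instance qry :: countable by countable_datatype

lemma pmf_bind_mix:
  assumes "0 \<le> p" "p \<le> 1"
  shows "pmf (bind_pmf (mix p a b) f) y = p * pmf (f a) y + (1 - p) * pmf (f b) y"
  using assms by (simp add: mix_def bind_map_pmf pmf_bind)

lemma set_mix: "set_pmf (mix p a b) \<subseteq> {a, b}"
  by (auto simp: mix_def)

lemma pmf_mix:
  assumes "0 \<le> p" "p \<le> 1"
  shows "pmf (mix p a b) x = (if x = a then p else 0) + (if x = b then 1 - p else 0)"
proof -
  have "mix p a b = bind_pmf (mix p a b) return_pmf" by (simp add: bind_return_pmf')
  then have "pmf (mix p a b) x = pmf (bind_pmf (mix p a b) return_pmf) x" by simp
  also have "\<dots> = (if x = a then p else 0) + (if x = b then 1 - p else 0)" using assms by (subst pmf_bind_mix) (auto simp: pmf_return)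
  finally show ?thesis .
qed

lemma fin_integrable:
  fixes f :: "'a \<Rightarrow> real"
  assumes "finite {x. f x \<noteq> 0}"
  shows "integrable (count_space UNIV) f"
proof -
  let ?F = "{x. f x \<noteq> 0}"
  have "f = (\<lambda>x. \<Sum>a\<in>?F. indicator {a} x * f a)"
  proof
    fix x
    show "f x = (\<Sum>a\<in>?F. indicator {a} x * f a)"
      using assms by (cases "f x = 0") (auto simp: indicator_def sum.delta' cong: sum.cong)
  qed
  moreover have "integrable (count_space UNIV) (\<lambda>x. \<Sum>a\<in>?F. indicator {a} x * f a)"
    apply (rule Bochner_Integration.integrable_sum)
    apply (rule Bochner_Integration.integrable_mult_left)
    apply (rule integrable_real_indicator)
    apply auto
    done
  ultimately show ?thesis by simp
qed

fun flip :: "st \<Rightarrow> st" where "flip A = B" | "flip B = A"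
fun st_of :: "qry \<Rightarrow> st" where "st_of QA = A" | "st_of QB = B" | "st_of QAB = A"

definition fX :: "real \<Rightarrow> real \<Rightarrow> nat \<Rightarrow> st \<Rightarrow> st" where
  "fX \<alpha> \<beta> n x = (if 1 < \<alpha> + \<beta> \<and> odd n then flip x else x)"

definition gL :: "real \<Rightarrow> real \<Rightarrow> nat \<Rightarrow> st \<Rightarrow> qry list \<Rightarrow> st" where
  "gL \<alpha> \<beta> n x qs = (if last (QAB # qs) = QAB then fX \<alpha> \<beta> n x else st_of (last qs))"

lemma st_of_qry_of[simp]: "st_of (qry_of x) = x"
  by (cases x) (auto simp: qry_of_def)

lemma qry_of_ne[simp]: "qry_of x \<noteq> QAB"
  by (cases x) (auto simp: qry_of_def)

lemma scheme_support:
  assumes "q \<in> set_pmf (scheme_pmf \<alpha> \<beta> t x0 x' qp)"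
  shows "(q \<noteq> QAB \<longrightarrow> q = qry_of x') \<and> (q = QAB \<longrightarrow> x' = fX \<alpha> \<beta> t x0)"
  using assms set_mix[of _ QA QAB] set_mix[of _ QB QAB]
  by (cases x0; cases x'; auto simp: scheme_pmf_def fX_def qry_of_def split: if_splits)

lemma traj_inv:
  "\<omega> \<in> set_pmf (traj p \<alpha> \<beta> n) \<Longrightarrow> fst \<omega> \<noteq> [] \<and> last (fst \<omega>) = gL \<alpha> \<beta> n (hd (fst \<omega>)) (snd \<omega>)"
proof (induction n arbitrary: \<omega>)
  case 0
  then show ?case by (auto simp: gL_def fX_def)
next
  case (Suc n)
  then obtain xs qs x' q' where w: "(xs, qs) \<in> set_pmf (traj p \<alpha> \<beta> n)"
    "q' \<in> set_pmf (scheme_pmf \<alpha> \<beta> (Suc n) (hd xs) x' (last (QAB # qs)))"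
    "\<omega> = (xs @ [x'], qs @ [q'])"
    by (auto split: prod.splits)
  from Suc.IH[OF w(1)] have "xs \<noteq> []" by simp
  with scheme_support[OF w(2)] w(3) show ?case
    by (auto simp: gL_def)
qed

definition Kn :: "real \<Rightarrow> real \<Rightarrow> nat \<Rightarrow> st \<Rightarrow> qry list \<Rightarrow> qry pmf" where
  "Kn \<alpha> \<beta> n x0 qs = bind_pmf (trans_pmf \<alpha> \<beta> (gL \<alpha> \<beta> n x0 qs))
      (\<lambda>x'. scheme_pmf \<alpha> \<beta> (Suc n) x0 x' (last (QAB # qs)))"

lemma Kindep:
  assumes ab: "0 \<le> \<alpha>" "\<alpha> \<le> 1" "0 \<le> \<beta>" "\<beta> \<le> 1"
  shows "Kn \<alpha> \<beta> n A qs = Kn \<alpha> \<beta> n B qs"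
proof (cases "last (QAB # qs) = QAB")
  case False
  then show ?thesis by (simp add: Kn_def gL_def scheme_pmf_def)
next
  case True
  show ?thesis
  proof (rule pmf_eqI)
    fix i
    consider "\<alpha> + \<beta> < 1" | "\<alpha> + \<beta> = 1" | "\<alpha> + \<beta> > 1" "even n" | "\<alpha> + \<beta> > 1" "odd n"
      by linarith
    then show "pmf (Kn \<alpha> \<beta> n A qs) i = pmf (Kn \<alpha> \<beta> n B qs) i"
    proof cases
      case 1
      then show ?thesis using ab True
        by (cases i) (auto simp: Kn_def gL_def fX_def trans_pmf_def pmf_bind_mix scheme_pmf_def
           pmf_mix field_simps)
    next
      case 2
      then show ?thesis using ab True
        by (cases i) (auto simp: Kn_def gL_def fX_def trans_pmf_def pmf_bind_mix scheme_pmf_def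
           pmf_mix field_simps qry_of_def)
    next
      case 3
      then show ?thesis using ab True
        by (cases i) (auto simp: Kn_def gL_def fX_def trans_pmf_def pmf_bind_mix scheme_pmf_def
           pmf_mix field_simps)
    next
      case 4
      then show ?thesis using ab True
        by (cases i) (auto simp: Kn_def gL_def fX_def trans_pmf_def pmf_bind_mix scheme_pmf_def
           pmf_mix field_simps)
    qed
  qed
qed

lemma joint_eq:
  assumes ab: "0 \<le> \<alpha>" "\<alpha> \<le> 1" "0 \<le> \<beta>" "\<beta> \<le> 1"
  shows "map_pmf (\<lambda>\<omega>. ((X0_rv \<omega>, Qpast_rv \<omega>), Qlast_rv \<omega>)) (traj p \<alpha> \<beta> (Suc n)) =
    bind_pmf (map_pmf (\<lambda>\<omega>. (hd (fst \<omega>), snd \<omega>)) (traj p \<alpha> \<beta> n))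
      (\<lambda>a. map_pmf (\<lambda>y. (a, y)) (Kn \<alpha> \<beta> n A (snd a)))"
proof -
  have "map_pmf (\<lambda>\<omega>. ((X0_rv \<omega>, Qpast_rv \<omega>), Qlast_rv \<omega>)) (traj p \<alpha> \<beta> (Suc n)) =
    bind_pmf (traj p \<alpha> \<beta> n) (\<lambda>\<omega>. map_pmf (\<lambda>y. ((hd (fst \<omega>), snd \<omega>), y)) (Kn \<alpha> \<beta> n A (snd \<omega>)))"
    unfolding traj.simps map_bind_pmf
  proof (rule bind_pmf_cong[OF refl])
    fix \<omega> assume w: "\<omega> \<in> set_pmf (traj p \<alpha> \<beta> n)"
    obtain xs qs where o: "\<omega> = (xs, qs)" by (cases \<omega>)
    from traj_inv[OF w] o have ne: "xs \<noteq> []" and l: "last xs = gL \<alpha> \<beta> n (hd xs) qs" by auto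
    have K: "Kn \<alpha> \<beta> n (hd xs) qs = Kn \<alpha> \<beta> n A qs"
      using Kindep[OF ab, of n qs] by (cases "hd xs") auto
    have "map_pmf (\<lambda>\<omega>. ((X0_rv \<omega>, Qpast_rv \<omega>), Qlast_rv \<omega>))
       (case (xs, qs) of (xs, qs) \<Rightarrow> trans_pmf \<alpha> \<beta> (last xs) \<bind>
          (\<lambda>x'. map_pmf (\<lambda>q'. (xs @ [x'], qs @ [q'])) (scheme_pmf \<alpha> \<beta> (Suc n) (hd xs) x' (last (QAB # qs)))))
      = map_pmf (\<lambda>y. ((hd xs, qs), y)) (Kn \<alpha> \<beta> n (hd xs) qs)"
      using ne unfolding Kn_def l[symmetric] map_bind_pmf
      by (simp add: map_bind_pmf map_pmf_comp X0_rv_def Qpast_rv_def Qlast_rv_def)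
    then show "map_pmf (\<lambda>\<omega>. ((X0_rv \<omega>, Qpast_rv \<omega>), Qlast_rv \<omega>))
       (case \<omega> of (xs, qs) \<Rightarrow> trans_pmf \<alpha> \<beta> (last xs) \<bind>
          (\<lambda>x'. map_pmf (\<lambda>q'. (xs @ [x'], qs @ [q'])) (scheme_pmf \<alpha> \<beta> (Suc n) (hd xs) x' (last (QAB # qs)))))
      = map_pmf (\<lambda>y. ((hd (fst \<omega>), snd \<omega>), y)) (Kn \<alpha> \<beta> n A (snd \<omega>))"
      using o K by simp
  qed
  also have "\<dots> = bind_pmf (map_pmf (\<lambda>\<omega>. (hd (fst \<omega>), snd \<omega>)) (traj p \<alpha> \<beta> n))
      (\<lambda>a. map_pmf (\<lambda>y. (a, y)) (Kn \<alpha> \<beta> n A (snd a)))"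
    by (simp add: bind_map_pmf)
  finally show ?thesis .
qed

lemma pmf_dep_pair:
  "pmf (bind_pmf D (\<lambda>a. map_pmf (\<lambda>y. (a, y)) (K a))) (a, y) = pmf D a * pmf (K a) y"
proof -
  have "pmf (bind_pmf D (\<lambda>a. map_pmf (\<lambda>y. (a, y)) (K a))) (a, y) =
     (\<integral>a'. indicator {a} a' * pmf (K a) y \<partial>measure_pmf D)"
    unfolding pmf_bind
  proof (rule Bochner_Integration.integral_cong[OF refl])
    fix a'
    show "pmf (map_pmf (Pair a') (K a')) (a, y) = indicator {a} a' * pmf (K a) y"
    proof (cases "a' = a")
      case True
      then show ?thesis using pmf_map_inj'[of "Pair a" "K a" y] by (simp add: inj_on_def)
    next
      case False
      then show ?thesis by (auto intro!: pmf_map_outside)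
    qed
  qed
  also have "\<dots> = pmf D a * pmf (K a) y"
    by (simp add: measure_pmf_single)
  finally show ?thesis .
qed

lemma UNIV_st: "(UNIV :: st set) = {A, B}" by (auto intro: st.exhaust)
lemma UNIV_qry: "(UNIV :: qry set) = {QA, QB, QAB}" by (auto intro: qry.exhaust)

lemma fin_st[simp]: "finite (S :: st set)" by (metis UNIV_st finite.emptyI finite_insert finite_subset subset_UNIV)
lemma fin_qry[simp]: "finite (S :: qry set)" by (metis UNIV_qry finite.emptyI finite_insert finite_subset subset_UNIV)

lemma finite_traj: "finite (set_pmf (traj p \<alpha> \<beta> n))"
  by (induction n) (auto simp: set_bind_pmf split: prod.splits)

lemma distr_pmf:
  "distributed (measure_pmf M) (count_space UNIV) f (\<lambda>x. ennreal (pmf (map_pmf f M) x))"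
proof -
  have "distr (measure_pmf M) (count_space UNIV) f = density (count_space UNIV) (\<lambda>x. ennreal (pmf (map_pmf f M) x))"
    unfolding map_pmf_rep_eq[symmetric] by (rule measure_pmf_eq_density)
  then show ?thesis unfolding distributed_def by simp
qed

theorem claim2:
  fixes \<alpha> \<beta> p :: real and t :: nat
  assumes "0 \<le> \<alpha>" "\<alpha> \<le> 1" "0 \<le> \<beta>" "\<beta> \<le> 1"
    and "\<exists>\<pi> :: int \<Rightarrow> real. \<pi> 0 = p
           \<and> (\<forall>s. \<pi> (s + 1) = \<pi> s * (1 - \<alpha>) + (1 - \<pi> s) * \<beta>)
           \<and> (\<forall>s. 0 < \<pi> s \<and> \<pi> s < 1)"
    and "1 \<le> t"
  shows "prob_space.conditional_mutual_information (measure_pmf (traj p \<alpha> \<beta> t)) 2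
           (count_space (X0_rv ` space (measure_pmf (traj p \<alpha> \<beta> t))))
           (count_space (Qlast_rv ` space (measure_pmf (traj p \<alpha> \<beta> t))))
           (count_space (Qpast_rv ` space (measure_pmf (traj p \<alpha> \<beta> t))))
           X0_rv Qlast_rv Qpast_rv = 0"
proof -
  have ab: "0 \<le> \<alpha>" "\<alpha> \<le> 1" "0 \<le> \<beta>" "\<beta> \<le> 1" using assms by auto
  obtain n where tn: "t = Suc n" using assms(6) by (cases t) auto
  define M where "M = traj p \<alpha> \<beta> t"
  interpret information_space "measure_pmf M" 2
    by unfold_locales simp
  have i1: "X0_rv ` space (measure_pmf M) = UNIV"
  proof -
    have "x = X0_rv ([x], [])" for x by (simp add: X0_rv_def)
    then show ?thesis by auto
  qed
  have i2: "Qlast_rv ` space (measure_pmf M) = UNIV"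
  proof -
    have "x = Qlast_rv ([], [x])" for x by (simp add: Qlast_rv_def)
    then show ?thesis by auto
  qed
  have i3: "Qpast_rv ` space (measure_pmf M) = UNIV"
  proof -
    have "x = Qpast_rv ([], x @ [QA])" for x by (simp add: Qpast_rv_def)
    then show ?thesis by auto
  qed
  have pm1: "count_space (UNIV :: qry set) \<Otimes>\<^sub>M count_space (UNIV :: qry list set) = count_space UNIV"
    by (simp add: pair_measure_countable)
  have pm2: "count_space (UNIV :: st set) \<Otimes>\<^sub>M count_space (UNIV :: qry list set) = count_space UNIV"
    by (simp add: pair_measure_countable)
  have pm3: "count_space (UNIV :: st set) \<Otimes>\<^sub>M (count_space (UNIV :: qry set) \<Otimes>\<^sub>M count_space (UNIV :: qry list set)) = count_space UNIV"
    by (simp add: pair_measure_countable)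
  define D where "D = map_pmf (\<lambda>\<omega>. (hd (fst \<omega>), snd \<omega>)) (traj p \<alpha> \<beta> n)"
  define KK where "KK = (\<lambda>z. Kn \<alpha> \<beta> n A z)"
  define J where "J = bind_pmf D (\<lambda>a. map_pmf (\<lambda>y. (a, y)) (KK (snd a)))"
  have JM: "map_pmf (\<lambda>\<omega>. ((X0_rv \<omega>, Qpast_rv \<omega>), Qlast_rv \<omega>)) M = J"
    unfolding M_def tn J_def D_def KK_def by (rule joint_eq[OF ab])
  define Px where "Px = pmf (map_pmf X0_rv M)"
  define Pz where "Pz = pmf (map_pmf Qpast_rv M)"
  define Pyz where "Pyz = pmf (map_pmf (\<lambda>\<omega>. (Qlast_rv \<omega>, Qpast_rv \<omega>)) M)"
  define Pxz where "Pxz = pmf (map_pmf (\<lambda>\<omega>. (X0_rv \<omega>, Qpast_rv \<omega>)) M)"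
  define Pxyz where "Pxyz = pmf (map_pmf (\<lambda>\<omega>. (X0_rv \<omega>, Qlast_rv \<omega>, Qpast_rv \<omega>)) M)"
  have fin: "finite (set_pmf M)" unfolding M_def by (rule finite_traj)
  have ePxyz: "Pxyz (x, y, z) = pmf D (x, z) * pmf (KK z) y" for x y z
  proof -
    have "map_pmf (\<lambda>\<omega>. (X0_rv \<omega>, Qlast_rv \<omega>, Qpast_rv \<omega>)) M =
       map_pmf (\<lambda>((x, z), y). (x, y, z)) J"
      unfolding JM[symmetric] by (simp add: map_pmf_comp)
    moreover have "inj (\<lambda>((x::st, z::qry list), y::qry). (x, y, z))"
      by (auto simp: inj_def)
    ultimately have "Pxyz (x, y, z) = pmf J ((x, z), y)"
      unfolding Pxyz_def using pmf_map_inj'[of "\<lambda>((x::st, z::qry list), y::qry). (x, y, z)" J "((x, z), y)"]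
      by simp
    then show ?thesis unfolding J_def using pmf_dep_pair[of D "\<lambda>a. KK (snd a)" "(x, z)" y] by simp
  qed
  have ePxz: "Pxz = pmf D"
  proof -
    have "map_pmf (\<lambda>\<omega>. (X0_rv \<omega>, Qpast_rv \<omega>)) M = map_pmf fst J"
      unfolding JM[symmetric] by (simp add: map_pmf_comp)
    also have "\<dots> = D" unfolding J_def by (simp add: map_bind_pmf map_pmf_comp bind_return_pmf')
    finally show ?thesis unfolding Pxz_def by simp
  qed
  have ePz: "Pz = pmf (map_pmf snd D)"
  proof -
    have "map_pmf Qpast_rv M = map_pmf (\<lambda>x. snd (fst x)) J"
      unfolding JM[symmetric] by (simp add: map_pmf_comp)
    also have "\<dots> = map_pmf snd D" unfolding J_def
      by (simp add: map_bind_pmf map_pmf_comp bind_return_pmf' map_pmf_def[symmetric])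
    finally show ?thesis unfolding Pz_def by simp
  qed
  have ePyz: "Pyz (y, z) = pmf (map_pmf snd D) z * pmf (KK z) y" for y z
  proof -
    have "map_pmf (\<lambda>\<omega>. (Qlast_rv \<omega>, Qpast_rv \<omega>)) M = map_pmf (\<lambda>((x, z), y). (y, z)) J"
      unfolding JM[symmetric] by (simp add: map_pmf_comp)
    also have "\<dots> = map_pmf prod.swap
        (bind_pmf (map_pmf snd D) (\<lambda>z. map_pmf (\<lambda>y. (z, y)) (KK z)))"
      unfolding J_def by (simp add: map_bind_pmf map_pmf_comp bind_map_pmf split_beta)
    finally have "map_pmf (\<lambda>\<omega>. (Qlast_rv \<omega>, Qpast_rv \<omega>)) M = map_pmf prod.swap
        (bind_pmf (map_pmf snd D) (\<lambda>z. map_pmf (\<lambda>y. (z, y)) (KK z)))" .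
    then have "Pyz (y, z) = pmf (bind_pmf (map_pmf snd D) (\<lambda>z. map_pmf (\<lambda>y. (z, y)) (KK z))) (z, y)"
      unfolding Pyz_def using pmf_map_inj'[of prod.swap _ "(z, y)"] by simp
    then show ?thesis using pmf_dep_pair[of "map_pmf snd D" KK z y] by simp
  qed
  have d1: "distributed (measure_pmf M) (count_space UNIV) X0_rv (\<lambda>x. ennreal (Px x))"
    unfolding Px_def by (rule distr_pmf)
  have d2: "distributed (measure_pmf M) (count_space UNIV) Qpast_rv (\<lambda>x. ennreal (Pz x))"
    unfolding Pz_def by (rule distr_pmf)
  have d3: "distributed (measure_pmf M) (count_space UNIV \<Otimes>\<^sub>M count_space UNIV)
      (\<lambda>x. (Qlast_rv x, Qpast_rv x)) (\<lambda>x. ennreal (Pyz x))"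
    unfolding pm1 Pyz_def by (rule distr_pmf)
  have d4: "distributed (measure_pmf M) (count_space UNIV \<Otimes>\<^sub>M count_space UNIV)
      (\<lambda>x. (X0_rv x, Qpast_rv x)) (\<lambda>x. ennreal (Pxz x))"
    unfolding pm2 Pxz_def by (rule distr_pmf)
  have d5: "distributed (measure_pmf M) (count_space UNIV \<Otimes>\<^sub>M (count_space UNIV \<Otimes>\<^sub>M count_space UNIV))
      (\<lambda>x. (X0_rv x, Qlast_rv x, Qpast_rv x)) (\<lambda>x. ennreal (Pxyz x))"
    unfolding pm3 Pxyz_def by (rule distr_pmf)
  have finsupp: "finite {w. f w \<noteq> 0}" if "\<And>w. f w \<noteq> 0 \<Longrightarrow> Pxyz w \<noteq> 0"
    for f :: "st \<times> qry \<times> qry list \<Rightarrow> real"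
  proof (rule finite_subset)
    show "{w. f w \<noteq> 0} \<subseteq> set_pmf (map_pmf (\<lambda>\<omega>. (X0_rv \<omega>, Qlast_rv \<omega>, Qpast_rv \<omega>)) M)"
    proof
      fix w assume "w \<in> {w. f w \<noteq> 0}"
      then have "pmf (map_pmf (\<lambda>\<omega>. (X0_rv \<omega>, Qlast_rv \<omega>, Qpast_rv \<omega>)) M) w \<noteq> 0"
        using that unfolding Pxyz_def by simp
      then show "w \<in> set_pmf (map_pmf (\<lambda>\<omega>. (X0_rv \<omega>, Qlast_rv \<omega>, Qpast_rv \<omega>)) M)"
        using set_pmf_iff by metis
    qed
    show "finite (set_pmf (map_pmf (\<lambda>\<omega>. (X0_rv \<omega>, Qlast_rv \<omega>, Qpast_rv \<omega>)) M))"
      using fin by simp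
  qed
  have I1: "integrable (count_space UNIV \<Otimes>\<^sub>M (count_space UNIV \<Otimes>\<^sub>M count_space UNIV))
     (\<lambda>(x, y, z). Pxyz (x, y, z) * log 2 (Pxyz (x, y, z) / (Px x * Pyz (y, z))))"
    unfolding pm3 by (rule fin_integrable, rule finsupp) auto
  have I2: "integrable (count_space UNIV \<Otimes>\<^sub>M (count_space UNIV \<Otimes>\<^sub>M count_space UNIV))
     (\<lambda>(x, y, z). Pxyz (x, y, z) * log 2 (Pxz (x, z) / (Px x * Pz z)))"
    unfolding pm3 by (rule fin_integrable, rule finsupp) auto
  have sf1: "sigma_finite_measure (count_space (UNIV :: st set))" by (rule sigma_finite_measure_count_space)
  have sf2: "sigma_finite_measure (count_space (UNIV :: qry set))" by (rule sigma_finite_measure_count_space)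
  have sf3: "sigma_finite_measure (count_space (UNIV :: qry list set))" by (rule sigma_finite_measure_count_space)
  have zero: "Pxyz (x, y, z) * log 2 (Pxyz (x, y, z) / (Pxz (x, z) * (Pyz (y, z) / Pz z))) = 0" for x y z
  proof (cases "pmf D (x, z) = 0 \<or> pmf (KK z) y = 0")
    case True
    then show ?thesis using ePxyz by auto
  next
    case False
    then have "(x, z) \<in> set_pmf D" by (simp add: set_pmf_iff)
    then have "z \<in> set_pmf (map_pmf snd D)" by force
    then have "pmf (map_pmf snd D) z \<noteq> 0" using set_pmf_iff by metis
    with False show ?thesis by (simp add: ePxyz ePxz ePyz ePz)
  qed
  have "prob_space.conditional_mutual_information (measure_pmf M) (2::real) (count_space UNIV) (count_space UNIV) (count_space UNIV)
      X0_rv Qlast_rv Qpast_rv =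
    (\<integral>(x, y, z). Pxyz (x, y, z) * log 2 (Pxyz (x, y, z) / (Pxz (x, z) * (Pyz (y,z) / Pz z)))
       \<partial>(count_space UNIV \<Otimes>\<^sub>M (count_space UNIV \<Otimes>\<^sub>M count_space UNIV)))"
    by (rule conditional_mutual_information_generic_eq[OF sf1 sf2 sf3 d1 _ d2 _ d3 _ d4 _ d5 _ I1 I2])
       (auto simp: Px_def Pz_def Pyz_def Pxz_def Pxyz_def)
  also have "\<dots> = 0" by (simp only: zero split_beta' Bochner_Integration.integral_zero)
  finally show ?thesis unfolding M_def[symmetric] i1 i2 i3 .
qed

end
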